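(* The algorithm BudgetFPT described in the context, run on an instance with budget $b$, $s$ entry nodes, maximum attack path length $l$ and $n$ nodes, has running time \[O\left(l^b \binom{b+s-1}{b} n\right).\]
   Context: An instance consists of a directed graph $G=(V,E)$ with $n=|V|$ nodes, a destination node $\mathrm{DA}$, $s$ entry nodes (uniformly likely), a set of blockable edges $E_b\subseteq E$, and a budget $b$. For a set $B\subseteq E_b$ of blocked edges, $|SP(s_i,G-B)|$ is the number of edges of a shortest path from entry node $s_i$ to $\mathrm{DA}$ in $G-B$ ($+\infty$ if none), and $f$ is a fixed decreasing function with $f(+\infty)=0$; the goal is to minimize $\frac1s\sum_i f(|SP(s_i,G-B)|)$ over $B\subseteq E_b$, $|B|\le b$. The maximum attack path length $l$ is the maximum number of edges of a path to $\mathrm{DA}$ in $G$. As a standing assumption, graphs are tree-like with $m=|E|=O(n)$. Algorithm BudgetFPT$(G,b)$: if $b=0$, compute by breadth-first search from $\mathrm{DA}$ the distances of all remaining entry nodes to $\mathrm{DA}$ and return $\sum_i f(\mathrm{dist}(s_i))/s$; if no entry nodes remain, return $0$. Otherwise pick an arbitrary remaining entry node $s_1$ and an arbitrary shortest path $p$ from $s_1$ to $\mathrm{DA}$. Record the value BudgetFPT$(G',b)+f(\mathrm{dist}(s_1))/s$, where $G'$ is $G$ with $s_1$ no longer treated as an entry node; and for every blockable edge $e$ on $p$, record BudgetFPT$(G-e,b-1)$. Return the minimum recorded value. *)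

theory Defs
  imports Complex_Main "HOL-Library.Extended_Nat"
begin

definition is_path :: "('v \<times> 'v) set \<Rightarrow> 'v list \<Rightarrow> 'v \<Rightarrow> 'v \<Rightarrow> bool" where
  "is_path E xs u v \<longleftrightarrow> xs \<noteq> [] \<and> hd xs = u \<and> last xs = v \<and>
     (\<forall>i. Suc i < length xs \<longrightarrow> (xs ! i, xs ! Suc i) \<in> E)"

definition dist :: "('v \<times> 'v) set \<Rightarrow> 'v \<Rightarrow> 'v \<Rightarrow> enat" where
  "dist E u v = (INF xs \<in> {xs. is_path E xs u v}. enat (length xs - 1))"

definition max_attack_len :: "('v \<times> 'v) set \<Rightarrow> 'v \<Rightarrow> nat" where
  "max_attack_len E DA = Max {length xs - 1 | xs. (\<exists>u. is_path E xs u DA) \<and> distinct xs}"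

definition valid_instance :: "'v set \<Rightarrow> ('v \<times> 'v) set \<Rightarrow> ('v \<times> 'v) set \<Rightarrow> 'v \<Rightarrow> 'v set \<Rightarrow> bool" where
  "valid_instance V E Eb DA S \<longleftrightarrow> finite V \<and> E \<subseteq> V \<times> V \<and> DA \<in> V \<and> S \<subseteq> V \<and> Eb \<subseteq> E"

text \<open>The arbitrary choices of BudgetFPT, modelled as choice functions of the current
  state (current edge set, remaining entry nodes, remaining budget): pick chooses the
  remaining entry node s1, sp chooses a shortest path from s1 to DA (if one exists).\<close>
definition valid_choices ::
  "'v \<Rightarrow> (('v \<times> 'v) set \<Rightarrow> 'v set \<Rightarrow> nat \<Rightarrow> 'v) \<Rightarrow> (('v \<times> 'v) set \<Rightarrow> 'v set \<Rightarrow> nat \<Rightarrow> 'v list) \<Rightarrow> bool" where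
  "valid_choices DA pick sp \<longleftrightarrow>
     (\<forall>E S b. S \<noteq> {} \<longrightarrow> pick E S b \<in> S \<and>
        (dist E (pick E S b) DA \<noteq> \<infinity> \<longrightarrow>
           is_path E (sp E S b) (pick E S b) DA \<and>
           enat (length (sp E S b) - 1) = dist E (pick E S b) DA))"

text \<open>Result: (value, cost). Every call is
  charged |V| + |E| (current graph), accounting for the breadth-first search /
  shortest-path computation and building the graph of the call. s0 is the original
  number s of entry nodes. The guard "finite S and u in S" only serves totality; it
  always holds for valid choices.\<close>
function budget_fpt ::
  "'v set \<Rightarrow> ('v \<times> 'v) set \<Rightarrow> 'v \<Rightarrow> (enat \<Rightarrow> real) \<Rightarrow> nat \<Rightarrow>
   (('v \<times> 'v) set \<Rightarrow> 'v set \<Rightarrow> nat \<Rightarrow> 'v) \<Rightarrow> (('v \<times> 'v) set \<Rightarrow> 'v set \<Rightarrow> nat \<Rightarrow> 'v list) \<Rightarrow>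
   ('v \<times> 'v) set \<Rightarrow> 'v set \<Rightarrow> nat \<Rightarrow> real \<times> nat" where
  "budget_fpt V Eb DA f s0 pick sp E S b =
    (if b = 0 then ((\<Sum>u\<in>S. f (dist E u DA)) / real s0, card V + card E)
     else if S = {} then (0, card V + card E)
     else
       (let u = pick E S b;
            p = (if dist E u DA = \<infinity> then [] else sp E S b);
            blk = remdups (filter (\<lambda>e. e \<in> Eb) (zip p (tl p)));
            r0 = (if finite S \<and> u \<in> S then budget_fpt V Eb DA f s0 pick sp E (S - {u}) b
                  else (0, 0));
            rs = map (\<lambda>e. budget_fpt V Eb DA f s0 pick sp (E - {e}) S (b - 1)) blk
        in (Min (set ((fst r0 + f (dist E u DA) / real s0) # map fst rs)),
            card V + card E + snd r0 + sum_list (map snd rs))))"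
  by pat_completeness auto
termination
  by (relation "measure (\<lambda>(V, Eb, DA, f, s0, pick, sp, E, S, b). b + card S)")
     (auto simp: card_gt_0_iff)

end

theory Submission
  imports Defs
begin
declare budget_fpt.simps[simp del]


lemma path_succ: "is_path E xs u v = (xs \<noteq> [] \<and> hd xs = u \<and> last xs = v \<and> successively (\<lambda>x y. (x,y) \<in> E) xs)"
  by (simp add: is_path_def successively_conv_nth)

lemma shortcut:
  assumes "is_path E xs u v" "\<not> distinct xs"
  shows "\<exists>ys. is_path E ys u v \<and> length ys < length xs"
proof -
  obtain a b c y where xs: "xs = a @ [y] @ b @ [y] @ c" using not_distinct_decomp[OF assms(2)] by blast
  have s: "successively (\<lambda>x y. (x,y) \<in> E) (a @ [y] @ b @ [y] @ c)" using assms(1) xs by (simp add: path_succ)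
  have s1: "successively (\<lambda>x y. (x,y) \<in> E) (a @ [y])"
    using s successively_append_iff[of _ "a @ [y]" "b @ [y] @ c"] by simp
  have s2: "successively (\<lambda>x y. (x,y) \<in> E) ([y] @ c)"
    using s successively_append_iff[of _ "a @ [y] @ b" "[y] @ c"] by simp
  have s3: "successively (\<lambda>x y. (x,y) \<in> E) (a @ [y] @ c)"
  proof (cases c)
    case (Cons z c')
    have "successively (\<lambda>x y. (x,y) \<in> E) ((a @ [y]) @ (z # c'))"
    proof -
      have e: "(last (a @ [y]), hd (z # c')) \<in> E" using s2 Cons by simp
      have "successively (\<lambda>x y. (x,y) \<in> E) (z # c')" using s2 Cons by simp
      then show ?thesis using s1 e successively_append_iff[of "\<lambda>x y. (x,y) \<in> E" "a @ [y]" "z # c'"] by blast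
    qed
    then show ?thesis using Cons by simp
  qed (use s1 in simp)
  have "is_path E (a @ [y] @ c) u v"
    proof -
    have "a @ [y] @ c \<noteq> []" by simp
    moreover have "hd (a @ [y] @ c) = u" using assms(1) unfolding xs path_succ by (cases a) auto
    moreover have "last (a @ [y] @ c) = v" using assms(1) unfolding xs path_succ by (cases c) auto
    ultimately show ?thesis using s3 unfolding path_succ by blast
  qed
  then show ?thesis using xs by (intro exI[of _ "a @ [y] @ c"]) auto
qed

lemma dist_le: "is_path E xs u v \<Longrightarrow> dist E u v \<le> enat (length xs - 1)"
proof -
  assume "is_path E xs u v"
  then have "xs \<in> {xs. is_path E xs u v}" by simp
  then have "(INF ys \<in> {xs. is_path E xs u v}. enat (length ys - 1)) \<le> enat (length xs - 1)"
    by (rule INF_lower)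
  then show ?thesis unfolding dist_def .
qed

lemma sp_distinct:
  assumes "is_path E xs u v" "enat (length xs - 1) = dist E u v"
  shows "distinct xs"
proof (rule ccontr)
  assume "\<not> distinct xs"
  from shortcut[OF assms(1) this] obtain ys where ys: "is_path E ys u v" "length ys < length xs" by (elim exE conjE)
  have "ys \<noteq> []" using ys(1) by (simp add: is_path_def)
  then have "length ys - 1 < length xs - 1" using ys(2) by (cases ys) auto
  have "dist E u v \<le> enat (length ys - 1)" by (rule dist_le[OF ys(1)])
  also have "enat (length ys - 1) < enat (length xs - 1)" using \<open>length ys - 1 < length xs - 1\<close> by simp
  finally have "dist E u v < enat (length xs - 1)" .
  then show False using assms(2) by simp
qed

lemma path_in_V:
  assumes "E \<subseteq> V \<times> V" "v \<in> V" "is_path E xs u v"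
  shows "set xs \<subseteq> V"
proof
  fix x assume "x \<in> set xs"
  then obtain i where i: "i < length xs" "xs ! i = x" by (auto simp: in_set_conv_nth)
  show "x \<in> V"
  proof (cases "Suc i < length xs")
    case True
    then have "(xs ! i, xs ! Suc i) \<in> E" using assms(3) by (simp add: is_path_def)
    then show ?thesis using assms(1) i by auto
  next
    case False
    then have "i = length xs - 1" using i by simp
    moreover have "xs \<noteq> []" using i by auto
    ultimately have "x = last xs" using i by (simp add: last_conv_nth)
    then show ?thesis using assms by (simp add: is_path_def)
  qed
qed

lemma len_le_l:
  assumes "finite V" "E0 \<subseteq> V \<times> V" "DA \<in> V" "E \<subseteq> E0" "is_path E xs u DA" "distinct xs"
  shows "length xs - 1 \<le> max_attack_len E0 DA"
proof -
  let ?M = "{length xs - 1 | xs. (\<exists>u. is_path E0 xs u DA) \<and> distinct xs}"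
  have p0: "is_path E0 xs u DA" using assms(4,5) by (auto simp: is_path_def)
  have "?M \<subseteq> {..card V}"
  proof
    fix m assume "m \<in> ?M"
    then obtain ys w where ys: "m = length ys - 1" "is_path E0 ys w DA" "distinct ys" by blast
    have "set ys \<subseteq> V" using path_in_V[OF assms(2,3) ys(2)] .
    then have "card (set ys) \<le> card V" using assms(1) card_mono by blast
    then show "m \<in> {..card V}" using ys distinct_card[of ys] by auto
  qed
  then have "finite ?M" using finite_subset by blast
  moreover have "length xs - 1 \<in> ?M" using p0 assms(6) by blast
  ultimately show ?thesis unfolding max_attack_len_def by (rule Max_ge)
qed

lemma p_cases:
  assumes vc: "valid_choices DA pick sp" and "finite V" "E0 \<subseteq> V \<times> V" "DA \<in> V" "E \<subseteq> E0" "S \<noteq> {}"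
  shows "(if dist E (pick E S b) DA = \<infinity> then [] else sp E S b) = [] \<or>
    (is_path E (if dist E (pick E S b) DA = \<infinity> then [] else sp E S b) (pick E S b) DA \<and>
     length (if dist E (pick E S b) DA = \<infinity> then [] else sp E S b) - 1 \<le> max_attack_len E0 DA)"
proof (cases "dist E (pick E S b) DA = \<infinity>")
  case False
  then have h: "is_path E (sp E S b) (pick E S b) DA" "enat (length (sp E S b) - 1) = dist E (pick E S b) DA"
    using vc assms(6) unfolding valid_choices_def by blast+
  have "distinct (sp E S b)" using sp_distinct[OF h] .
  then show ?thesis using False h len_le_l[OF assms(2-5) h(1)] by simp
qed simp

lemma short_path:
  assumes "is_path E p u DA" "length p - 1 \<le> 1"
  shows "zip p (tl p) = [] \<or> (p = [u, DA] \<and> zip p (tl p) = [(u,DA)])"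
proof -
  have "p \<noteq> []" using assms by (simp add: is_path_def)
  then obtain x q where p: "p = x # q" by (cases p) auto
  show ?thesis
  proof (cases q)
    case Nil then show ?thesis using p by simp
  next
    case (Cons y r)
    then have "r = []" using assms(2) p by simp
    then show ?thesis using assms(1) p Cons by (simp add: is_path_def)
  qed
qed

lemma sum_list_bound:
  assumes "\<forall>x \<in> set xs. real (g x) \<le> B"
  shows "real (sum_list (map g xs)) \<le> real (length xs) * B"
  using assms by (induction xs) (auto simp: algebra_simps)

lemma cost_noblk:
  assumes "b \<noteq> 0" "S \<noteq> {}" "finite S" "pick E S b \<in> S"
    "remdups (filter (\<lambda>e. e \<in> Eb) (zip (if dist E (pick E S b) DA = \<infinity> then [] else sp E S b)
       (tl (if dist E (pick E S b) DA = \<infinity> then [] else sp E S b)))) = []"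
  shows "snd (budget_fpt V Eb DA f s0 pick sp E S b) =
     card V + card E + snd (budget_fpt V Eb DA f s0 pick sp E (S - {pick E S b}) b)"
  using assms by (subst budget_fpt.simps) (simp add: Let_def del: budget_fpt.simps)

lemma cost_empty:
  "b \<noteq> 0 \<Longrightarrow> snd (budget_fpt V Eb DA f s0 pick sp E {} b) = card V + card E"
  by (subst budget_fpt.simps) (simp del: budget_fpt.simps)

lemma main:
  shows "valid_choices DA pick sp \<Longrightarrow> finite V \<Longrightarrow> E0 \<subseteq> V \<times> V \<Longrightarrow>
    DA \<in> V \<Longrightarrow> 1 \<le> max_attack_len E0 DA \<Longrightarrow> E \<subseteq> E0 \<Longrightarrow> finite S \<Longrightarrow> 1 \<le> card S \<Longrightarrow>
    real (snd (budget_fpt V Eb DA f s0 pick sp E S b))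
      \<le> real (card V + card E0) * (6 * real (max_attack_len E0 DA) ^ b * real ((b + card S - 1) choose b) - 2)"
proof (induction V Eb DA f s0 pick sp E S b rule: budget_fpt.induct)
  case (1 V Eb DA f s0 pick sp E S b)
  note IH1 = "1.IH"(1) and IH2 = "1.IH"(2)
  note vc = "1.prems"(1) and fV = "1.prems"(2) and E0V = "1.prems"(3) and DA = "1.prems"(4)
    and l1 = "1.prems"(5) and EE0 = "1.prems"(6) and fS = "1.prems"(7) and S1 = "1.prems"(8)
  let ?c = "budget_fpt V Eb DA f s0 pick sp"
  define N where "N = real (card V + card E0)"
  define l where "l = max_attack_len E0 DA"
  have fE0: "finite E0" using fV E0V finite_subset by blast
  have cardE: "card E \<le> card E0" using EE0 fE0 card_mono by blast
  have N0: "0 \<le> N" unfolding N_def by simp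
  have NE: "real (card V + card E) \<le> N" unfolding N_def using cardE by simp
  have L1: "1 \<le> real l" using l1 l_def by simp
  show ?case
  proof (cases "b = 0")
    case True
    have "real (snd (?c E S b)) = real (card V + card E)" using True
      by (subst budget_fpt.simps) simp
    also have "\<dots> \<le> N * 4" using NE N0 by linarith
    finally show ?thesis using True by (simp add: N_def)
  next
    case False
    have Sne: "S \<noteq> {}" using S1 by auto
    define u where "u = pick E S b"
    define p where "p = (if dist E u DA = \<infinity> then [] else sp E S b)"
    define blk where "blk = remdups (filter (\<lambda>e. e \<in> Eb) (zip p (tl p)))"
    have uS: "u \<in> S" using vc Sne unfolding valid_choices_def u_def by blast
    have eq: "snd (?c E S b) = card V + card E + snd (?c E (S - {u}) b)
        + sum_list (map (\<lambda>e. snd (?c (E - {e}) S (b - 1))) blk)"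
      using False Sne uS fS unfolding blk_def p_def u_def
      by (subst budget_fpt.simps) (simp add: Let_def o_def)
    have pc: "p = [] \<or> (is_path E p u DA \<and> length p - 1 \<le> l)"
      using p_cases[OF vc fV E0V DA EE0 Sne, of b] unfolding p_def u_def l_def .
    have lenblk: "length blk \<le> length p - 1"
    proof -
      have "length blk \<le> length (filter (\<lambda>e. e \<in> Eb) (zip p (tl p)))"
        unfolding blk_def by (rule length_remdups_leq)
      also have "\<dots> \<le> length (zip p (tl p))" by (rule length_filter_le)
      finally show ?thesis by simp
    qed
    have blkl: "length blk \<le> l" using pc lenblk by auto
    obtain b' where b': "b = Suc b'" using False by (cases b) auto
    define P where "P = real l ^ b'"
    have P1: "1 \<le> P" unfolding P_def using L1 by simp
    have lb: "real l ^ b = real l * P" unfolding P_def b' by simp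
    have ub: "real (snd (?c (E - {e}) S (b - 1))) \<le> N * (6 * P * real ((b' + card S - 1) choose b') - 2)"
      if e: "e \<in> set blk" for e
    proof -
      have "E - {e} \<subseteq> E0" using EE0 by auto
      from IH2[OF False Sne u_def p_def blk_def refl e vc fV E0V DA l1 this fS S1]
      show ?thesis unfolding N_def P_def l_def b' by simp
    qed
    have X0: "0 \<le> 6 * P * real ((b' + card S - 1) choose b') - 2"
    proof -
      have "0 < (b' + card S - 1) choose b'" using S1 by (intro zero_less_binomial) simp
      then have "1 \<le> real ((b' + card S - 1) choose b')" by linarith
      then have "1 \<le> P * real ((b' + card S - 1) choose b')" using P1
        proof -
        have "1 * 1 \<le> P * real ((b' + card S - 1) choose b')"
          using P1 \<open>1 \<le> real ((b' + card S - 1) choose b')\<close> by (intro mult_mono) simp_all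
        then show ?thesis by simp
      qed
      then show ?thesis by linarith
    qed
    have sumb: "real (sum_list (map (\<lambda>e. snd (?c (E - {e}) S (b - 1))) blk))
        \<le> real l * (N * (6 * P * real ((b' + card S - 1) choose b') - 2))"
    proof -
      have "real (sum_list (map (\<lambda>e. snd (?c (E - {e}) S (b - 1))) blk))
          \<le> real (length blk) * (N * (6 * P * real ((b' + card S - 1) choose b') - 2))"
        using ub by (intro sum_list_bound) blast
      also have "\<dots> \<le> real l * (N * (6 * P * real ((b' + card S - 1) choose b') - 2))"
        using blkl X0 N0 by (intro mult_right_mono) simp_all
      finally show ?thesis .
    qed
    show ?thesis
    proof (cases "card S \<ge> 2")
      case True
      have fS': "finite (S - {u})" using fS by simp
      have cS': "card (S - {u}) = card S - 1" using fS uS by simp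
      have S1': "1 \<le> card (S - {u})" using cS' True by simp
      have r0: "real (snd (?c E (S - {u}) b)) \<le> N * (6 * (real l * P) * real ((b + card S - 2) choose b) - 2)"
        using IH1[OF False Sne u_def p_def blk_def conjI[OF fS uS] vc fV E0V DA l1 EE0 fS' S1']
        unfolding N_def l_def[symmetric] lb cS' using True by (simp add: numeral_2_eq_2)
      have pas: "(b + card S - 1) choose b = ((b + card S - 2) choose b) + ((b' + card S - 1) choose b')"
        using True choose_reduce_nat[of "b + card S - 1" b] b' by (simp add: numeral_2_eq_2)
      define A where "A = real ((b + card S - 2) choose b)"
      define B where "B = real ((b' + card S - 1) choose b')"
      have NL: "1 * N \<le> real l * N" using N0 L1 by (intro mult_right_mono) simp_all
      have id: "N * (6 * (real l * P) * (A + B) - 2) = N * (6 * (real l * P) * A - 2) + real l * (N * (6 * P * B - 2)) + 2 * (real l * N)"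
        by (simp add: algebra_simps)
      have "real (snd (?c E S b)) \<le> N + N * (6 * (real l * P) * A - 2) + real l * (N * (6 * P * B - 2))"
        using eq NE r0 sumb unfolding A_def B_def by simp
      also have "\<dots> \<le> N * (6 * (real l * P) * (A + B) - 2)" unfolding id using NL N0 by simp
      finally have fin: "real (snd (?c E S b)) \<le> N * (6 * (real l * P) * (A + B) - 2)" .
      show ?thesis unfolding N_def[symmetric] l_def[symmetric] lb pas of_nat_add
        A_def[symmetric] B_def[symmetric] using fin unfolding N_def by simp
    next
      case False
      then have cS: "card S = 1" using S1 by simp
      then have Su: "S = {u}" using uS by (metis card_1_singletonE singletonD)
      have ce: "snd (?c E {} b) = card V + card E" by (rule cost_empty[OF \<open>b \<noteq> 0\<close>])
      have r0: "real (snd (?c E (S - {u}) b)) \<le> N" using NE Su by (simp only: Diff_cancel ce)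
      show ?thesis
      proof (cases "l \<ge> 2")
        case True
        have L2: "2 \<le> real l" using True by simp
        have "real (snd (?c E S b)) \<le> N + N + real l * (N * (6 * P - 2))"
          using eq NE r0 sumb cS by simp
        also have "\<dots> \<le> N * (6 * (real l * P) - 2)"
        proof -
          have "2 * N \<le> real l * N" using N0 L2 by (intro mult_right_mono) simp_all
          then show ?thesis by (simp add: algebra_simps)
        qed
        finally have fin: "real (snd (?c E S b)) \<le> N * (6 * (real l * P) - 2)" .
        show ?thesis unfolding N_def[symmetric] l_def[symmetric] lb cS using fin by simp
      next
        case False
        then have l1': "l = 1" using L1 by simp
        have child: "real (snd (?c (E - {e}) S (b - 1))) \<le> 2 * N" if e: "e \<in> set blk" for e
        proof -
          have "p \<noteq> []" using e unfolding blk_def by auto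
          then have pp: "is_path E p u DA" "length p - 1 \<le> 1" using pc l1' by auto
          then have "zip p (tl p) \<noteq> []" using e unfolding blk_def by auto
          then have pz: "p = [u, DA]" "zip p (tl p) = [(u, DA)]" using short_path[OF pp] by auto
          have eud: "e = (u, DA)" using e pz(2) unfolding blk_def by (auto split: if_splits)
          define E' where "E' = E - {e}"
          have E'E0: "E' \<subseteq> E0" using EE0 E'_def by auto
          have cE': "real (card V + card E') \<le> N" unfolding N_def E'_def
            using cardE card_Diff1_le[of E e] by simp
          show ?thesis
          proof (cases "b - 1 = 0")
            case True
            have "real (snd (?c E' S (b - 1))) = real (card V + card E')" using True
              by (subst budget_fpt.simps) simp
            then show ?thesis using cE' N0 E'_def by simp
          next
            case bF: False
            have pk: "pick E' S (b - 1) = u" using vc Su unfolding valid_choices_def by blast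
            define p' where "p' = (if dist E' u DA = \<infinity> then [] else sp E' S (b - 1))"
            have pc': "p' = [] \<or> (is_path E' p' u DA \<and> length p' - 1 \<le> l)"
              using p_cases[OF vc fV E0V DA E'E0 Sne, of "b - 1"] unfolding p'_def pk l_def .
            have z': "zip p' (tl p') = []"
            proof (rule ccontr)
              assume nz: "zip p' (tl p') \<noteq> []"
              then have "p' \<noteq> []" by auto
              then have pp': "is_path E' p' u DA" "length p' - 1 \<le> 1" using pc' l1' by auto
              then have "p' = [u, DA]" using short_path[OF pp'] nz by auto
              then have "(u, DA) \<in> E'" using pp'(1) unfolding is_path_def by auto
              then show False using eud E'_def by auto
            qed
            have "snd (?c E' S (b - 1)) = card V + card E' + snd (?c E' (S - {pick E' S (b - 1)}) (b - 1))"
              apply (rule cost_noblk)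
                  apply (rule bF)
                 apply (rule Sne)
                apply (rule fS)
              apply (unfold pk)
               apply (rule uS)
              apply (fold p'_def)
              apply (simp add: z')
              done
            also have "\<dots> = 2 * (card V + card E')"
            proof -
              have se: "S - {pick E' S (b - 1)} = {}" using pk Su by simp
              have ce': "snd (?c E' {} (b - 1)) = card V + card E'" by (rule cost_empty[OF bF])
              show ?thesis by (simp only: se ce') simp
            qed
            finally show ?thesis using cE' E'_def by simp
          qed
        qed
        have lb1: "length blk \<le> 1" using blkl l1' by simp
        have "real (sum_list (map (\<lambda>e. snd (?c (E - {e}) S (b - 1))) blk)) \<le> real (length blk) * (2 * N)"
          using child by (intro sum_list_bound) blast
        also have "\<dots> \<le> 2 * N" proof -
          have "real (length blk) * (2 * N) \<le> 1 * (2 * N)" using lb1 N0 by (intro mult_right_mono) simp_all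
          then show ?thesis by simp
        qed
        finally have fin: "real (snd (?c E S b)) \<le> N * 4" using eq NE r0 by simp
        show ?thesis unfolding N_def[symmetric] l_def[symmetric] l1' cS using fin by simp
      qed
    qed
  qed
qed

theorem proposition1:
  "\<forall>k::nat. \<exists>C::real. \<forall>(V::'v set) E Eb DA S b f pick sp.
     valid_instance V E Eb DA S \<and> card E \<le> k * card V \<and>
     antimono f \<and> f \<infinity> = 0 \<and> valid_choices DA pick sp \<and>
     card S \<ge> 1 \<and> max_attack_len E DA \<ge> 1 \<longrightarrow>
     real (snd (budget_fpt V Eb DA f (card S) pick sp E S b))
       \<le> C * real (max_attack_len E DA ^ b) * real ((b + card S - 1) choose b) * real (card V)"
proof
  fix k :: nat
  show "\<exists>C::real. \<forall>(V::'v set) E Eb DA S b f pick sp.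
     valid_instance V E Eb DA S \<and> card E \<le> k * card V \<and>
     antimono f \<and> f \<infinity> = 0 \<and> valid_choices DA pick sp \<and>
     card S \<ge> 1 \<and> max_attack_len E DA \<ge> 1 \<longrightarrow>
     real (snd (budget_fpt V Eb DA f (card S) pick sp E S b))
       \<le> C * real (max_attack_len E DA ^ b) * real ((b + card S - 1) choose b) * real (card V)"
  proof (intro exI allI impI)
    fix V :: "'v set" and E Eb DA S b and f :: "enat \<Rightarrow> real" and pick sp
    assume h: "valid_instance V E Eb DA S \<and> card E \<le> k * card V \<and>
     antimono f \<and> f \<infinity> = 0 \<and> valid_choices DA pick sp \<and>
     card S \<ge> 1 \<and> max_attack_len E DA \<ge> 1"
    have fV: "finite V" and EV: "E \<subseteq> V \<times> V" and DA: "DA \<in> V" and SV: "S \<subseteq> V"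
      using h unfolding valid_instance_def by auto
    have fS: "finite S" using fV SV finite_subset by blast
    define X where "X = real (max_attack_len E DA) ^ b * real ((b + card S - 1) choose b)"
    have X0: "0 \<le> X" unfolding X_def by simp
    have "real (snd (budget_fpt V Eb DA f (card S) pick sp E S b))
        \<le> real (card V + card E) * (6 * X - 2)"
    proof -
      have vc: "valid_choices DA pick sp" and l1: "1 \<le> max_attack_len E DA" and S1: "1 \<le> card S"
        using h by auto
      from main[OF vc fV EV DA l1 subset_refl fS S1]
      show ?thesis unfolding X_def by (simp add: mult.assoc)
    qed
    also have "\<dots> \<le> real (card V + card E) * (6 * X)" by (intro mult_left_mono) simp_all
    also have "\<dots> \<le> (real (k + 1) * real (card V)) * (6 * X)"
    proof (intro mult_right_mono)
      have "card V + card E \<le> (k + 1) * card V" using h by simp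
      then show "real (card V + card E) \<le> real (k + 1) * real (card V)"
        by (simp only: of_nat_le_iff of_nat_mult[symmetric])
    qed (use X0 in simp)
    also have "\<dots> = (6 * real (k + 1)) * real (max_attack_len E DA ^ b) * real ((b + card S - 1) choose b) * real (card V)"
      unfolding X_def by (simp add: algebra_simps)
    finally show "real (snd (budget_fpt V Eb DA f (card S) pick sp E S b))
       \<le> (6 * real (k + 1)) * real (max_attack_len E DA ^ b) * real ((b + card S - 1) choose b) * real (card V)" .
  qed
qed

end
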